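(* Let $M$ be an abelian group. If $M$ is an elementary abelian $2$-group (i.e. $x^2=1$ for all $x\in M$), then $(L_M,* )$ is an elementary abelian $2$-group. If $M$ is not an elementary abelian $2$-group, then $(L_M,* )$ is a nonassociative and noncommutative right Bol loop.
   Context: Let $M$ be an abelian group (written multiplicatively) and $K=\{1,a,b,c\}$ the Klein four-group. Set $L_M=K\times M$ with the operation $(A,x)*(B,y)=(AB,xy)$ if $B=1$, and $(A,x)*(B,y)=(AB,x^{-1}y)$ if $B\neq 1$. A right Bol loop is a loop satisfying $x((yz)y)=((xy)z)y$. *)

theory Defs
  imports Main
begin

datatype klein = K1 | Ka | Kb | Kc

fun kmul :: "klein \<Rightarrow> klein \<Rightarrow> klein" where
  "kmul K1 y = y"
| "kmul x K1 = x"
| "kmul Ka Ka = K1" | "kmul Ka Kb = Kc" | "kmul Ka Kc = Kb"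
| "kmul Kb Ka = Kc" | "kmul Kb Kb = K1" | "kmul Kb Kc = Ka"
| "kmul Kc Ka = Kb" | "kmul Kc Kb = Ka" | "kmul Kc Kc = K1"

text \<open>The abelian group M is written additively (type class ab_group_add):
  xy corresponds to x + y and x^{-1} to - x.
  L_M = K x M with (A,x)*(B,y) = (AB, xy) if B = 1, and (AB, x^{-1} y) otherwise.\<close>
definition LM_mul :: "klein \<times> 'm::ab_group_add \<Rightarrow> klein \<times> 'm \<Rightarrow> klein \<times> 'm" where
  "LM_mul p q = (case p of (A, x) \<Rightarrow> case q of (B, y) \<Rightarrow>
      if B = K1 then (kmul A B, x + y) else (kmul A B, - x + y))"

definition is_loop :: "('a \<Rightarrow> 'a \<Rightarrow> 'a) \<Rightarrow> bool" where
  "is_loop f \<longleftrightarrow> (\<exists>e. \<forall>x. f e x = x \<and> f x e = x)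
     \<and> (\<forall>a b. \<exists>!x. f a x = b) \<and> (\<forall>a b. \<exists>!y. f y a = b)"

definition right_bol_loop :: "('a \<Rightarrow> 'a \<Rightarrow> 'a) \<Rightarrow> bool" where
  "right_bol_loop f \<longleftrightarrow> is_loop f \<and>
     (\<forall>x y z. f x (f (f y z) y) = f (f (f x y) z) y)"

definition is_associative :: "('a \<Rightarrow> 'a \<Rightarrow> 'a) \<Rightarrow> bool" where
  "is_associative f \<longleftrightarrow> (\<forall>x y z. f (f x y) z = f x (f y z))"

definition is_commutative :: "('a \<Rightarrow> 'a \<Rightarrow> 'a) \<Rightarrow> bool" where
  "is_commutative f \<longleftrightarrow> (\<forall>x y. f x y = f y x)"

definition elem_ab_2group :: "('a \<Rightarrow> 'a \<Rightarrow> 'a) \<Rightarrow> bool" where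
  "elem_ab_2group f \<longleftrightarrow> is_associative f \<and> is_commutative f \<and>
     (\<exists>e. (\<forall>x. f e x = x \<and> f x e = x) \<and> (\<forall>x. f x x = e))"

end

theory Submission
  imports Defs
begin

lemma LM_eq: "LM_mul (A,u) (B,v) = (kmul A B, (if B = K1 then u else - u) + v)"
  by (simp add: LM_mul_def)

lemma kmul_self: "kmul A A = K1" by (cases A) auto
lemma kmul_comm: "kmul A B = kmul B A" by (cases A; cases B) auto
lemma kmul_assoc: "kmul (kmul A B) C = kmul A (kmul B C)" by (cases A; cases B; cases C) auto
lemma kmul_1: "kmul A K1 = A" by (cases A) auto
lemma kmul_cancel: "kmul A X = B \<longleftrightarrow> X = kmul A B"
  by (cases A; cases B; cases X) auto
lemma kmul_cancel2: "kmul Y A = B \<longleftrightarrow> Y = kmul B A"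
  by (cases A; cases B; cases Y) auto

lemma bol: "LM_mul x (LM_mul (LM_mul y z) y) = LM_mul (LM_mul (LM_mul x y) z) y"
proof -
  obtain A u where x: "x = (A,u)" by fastforce
  obtain B v where y: "y = (B,v)" by fastforce
  obtain C w where z: "z = (C,w)" by fastforce
  show ?thesis unfolding x y z LM_eq
    by (cases A; cases B; cases C) (auto simp: algebra_simps)
qed

theorem proposition3p3:
  shows "((\<forall>x::'m::ab_group_add. x + x = 0) \<longrightarrow> elem_ab_2group (LM_mul :: klein \<times> 'm \<Rightarrow> _ \<Rightarrow> _))
       \<and> (\<not> (\<forall>x::'m. x + x = 0) \<longrightarrow>
            right_bol_loop (LM_mul :: klein \<times> 'm \<Rightarrow> _ \<Rightarrow> _)
          \<and> \<not> is_associative (LM_mul :: klein \<times> 'm \<Rightarrow> _ \<Rightarrow> _)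
          \<and> \<not> is_commutative (LM_mul :: klein \<times> 'm \<Rightarrow> _ \<Rightarrow> _))"
proof (intro conjI impI)
  assume h: "\<forall>x::'m. x + x = 0"
  have neg: "- x = x" for x :: 'm using h by (metis add_eq_0_iff)
  have m: "LM_mul (A,u) (B,v) = (kmul A B, u + v)" for A B and u v :: 'm
    by (simp add: LM_eq neg)
  show "elem_ab_2group (LM_mul :: klein \<times> 'm \<Rightarrow> _ \<Rightarrow> _)"
    unfolding elem_ab_2group_def is_associative_def is_commutative_def
  proof (intro conjI allI exI)
    fix x y z :: "klein \<times> 'm"
    show "LM_mul (LM_mul x y) z = LM_mul x (LM_mul y z)"
      by (cases x; cases y; cases z) (simp add: m kmul_assoc add.assoc)
    show "LM_mul x y = LM_mul y x"
      by (cases x; cases y) (simp add: m kmul_comm add.commute)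
    show "LM_mul (K1,0) x = x" by (cases x) (simp add: m)
    show "LM_mul x (K1,0) = x" by (cases x) (simp add: m kmul_1)
    show "LM_mul x x = (K1,0)" by (cases x) (simp add: m kmul_self h)
  qed
next
  assume "\<not> (\<forall>x::'m. x + x = 0)"
  then obtain m :: 'm where hm: "m + m \<noteq> 0" by blast
  have hm': "- m \<noteq> m" using hm by (metis add_eq_0_iff)
  show "\<not> is_associative (LM_mul :: klein \<times> 'm \<Rightarrow> _ \<Rightarrow> _)"
  proof
    assume "is_associative (LM_mul :: klein \<times> 'm \<Rightarrow> _ \<Rightarrow> _)"
    hence "LM_mul (LM_mul (K1,m) (Ka,0)) (Kb,0) = LM_mul (K1,m) (LM_mul (Ka,0) (Kb,(0::'m)))"
      unfolding is_associative_def by blast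
    thus False using hm' by (simp add: LM_eq)
  qed
  show "\<not> is_commutative (LM_mul :: klein \<times> 'm \<Rightarrow> _ \<Rightarrow> _)"
  proof
    assume "is_commutative (LM_mul :: klein \<times> 'm \<Rightarrow> _ \<Rightarrow> _)"
    hence "LM_mul (K1,m) (Ka,0) = LM_mul (Ka,0) (K1,m)"
      unfolding is_commutative_def by blast
    thus False using hm' by (simp add: LM_eq)
  qed
  show "right_bol_loop (LM_mul :: klein \<times> 'm \<Rightarrow> _ \<Rightarrow> _)"
    unfolding right_bol_loop_def is_loop_def
  proof (intro conjI allI)
    show "\<exists>e. \<forall>x. LM_mul e x = x \<and> LM_mul x e = (x:: klein \<times> 'm)"
      by (rule exI[of _ "(K1,0)"]) (auto simp: LM_eq kmul_1)
  next
    fix a b :: "klein \<times> 'm"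
    obtain A u where a: "a = (A,u)" by fastforce
    obtain B v where b: "b = (B,v)" by fastforce
    show "\<exists>!x. LM_mul a x = b"
    proof
      show "LM_mul a (kmul A B, v - (if kmul A B = K1 then u else - u)) = b"
        unfolding a b LM_eq by (simp add: kmul_cancel)
    next
      fix x assume "LM_mul a x = b"
      then show "x = (kmul A B, v - (if kmul A B = K1 then u else - u))"
        unfolding a b by (cases x) (auto simp: LM_eq kmul_cancel algebra_simps split: if_splits)
    qed
    show "\<exists>!y. LM_mul y a = b"
    proof
      show "LM_mul (kmul B A, if A = K1 then v - u else u - v) a = b"
        unfolding a b LM_eq by (simp add: kmul_cancel2)
    next
      fix y assume "LM_mul y a = b"
      then show "y = (kmul B A, if A = K1 then v - u else u - v)"
        unfolding a b by (cases y) (auto simp: LM_eq kmul_cancel2 algebra_simps split: if_splits)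
    qed
  next
    fix x y z :: "klein \<times> 'm"
    show "LM_mul x (LM_mul (LM_mul y z) y) = LM_mul (LM_mul (LM_mul x y) z) y" by (rule bol)
  qed
qed

end
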